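(* Let $\rho_T$ and $\rho_A$ be density matrices on $\mathbb{C}^2$ with eigenvalues, sorted in decreasing order, $\{\alpha, 1-\alpha\}$ and $\{\beta, 1-\beta\}$ respectively (so $\alpha,\beta \ge 1/2$). Let $U$ be any unitary on $\mathbb{C}^2\otimes\mathbb{C}^2$, and let $\rho_T^{out} = \mathrm{Tr}_A\!\left(U(\rho_T\otimes\rho_A)U^\dagger\right)$ have eigenvalues, sorted in decreasing order, $\{\alpha^{out}, 1-\alpha^{out}\}$. Then $$\alpha^{out} \le \max(\alpha,\beta).$$
   Context: $\mathrm{Tr}_A$ denotes the partial trace over the second (auxiliary) tensor factor; the first factor is the target qubit. *)

theory Defs
  imports "HOL-Analysis.Analysis"
begin

text \<open>Qubit operators are 2x2 complex matrices indexed by the type 2;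
  operators on C^2 (x) C^2 are indexed by pairs (target index, auxiliary index).\<close>

type_synonym qmat = "complex ^ 2 ^ 2"
type_synonym qmat2 = "complex ^ (2 \<times> 2) ^ (2 \<times> 2)"

definition adjoint_mat :: "complex ^ 'n ^ 'n \<Rightarrow> complex ^ 'n ^ 'n" where
  "adjoint_mat M = (\<chi> i j. cnj (M $ j $ i))"

definition hermitian_mat :: "complex ^ 'n ^ 'n \<Rightarrow> bool" where
  "hermitian_mat M \<longleftrightarrow> adjoint_mat M = M"

definition psd_mat :: "complex ^ 'n ^ 'n \<Rightarrow> bool" where
  "psd_mat M \<longleftrightarrow> (\<forall>x :: complex ^ 'n.
     Im (\<Sum>i\<in>UNIV. cnj (x $ i) * (M *v x) $ i) = 0 \<and>
     Re (\<Sum>i\<in>UNIV. cnj (x $ i) * (M *v x) $ i) \<ge> 0)"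

definition trace_mat :: "complex ^ 'n ^ 'n \<Rightarrow> complex" where
  "trace_mat M = (\<Sum>i\<in>UNIV. M $ i $ i)"

definition density_mat :: "complex ^ 'n ^ 'n \<Rightarrow> bool" where
  "density_mat M \<longleftrightarrow> hermitian_mat M \<and> psd_mat M \<and> trace_mat M = 1"

definition unitary_mat :: "complex ^ 'n ^ 'n \<Rightarrow> bool" where
  "unitary_mat U \<longleftrightarrow> U ** adjoint_mat U = mat 1 \<and> adjoint_mat U ** U = mat 1"

definition eigenvalues_mat :: "complex ^ 'n ^ 'n \<Rightarrow> complex set" where
  "eigenvalues_mat M = {c. \<exists>v. v \<noteq> 0 \<and> M *v v = c *s v}"

definition tensor_mat :: "complex ^ 'n ^ 'n \<Rightarrow> complex ^ 'm ^ 'm \<Rightarrow> complex ^ ('n \<times> 'm) ^ ('n \<times> 'm)" where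
  "tensor_mat A B = (\<chi> p q. A $ fst p $ fst q * B $ snd p $ snd q)"

definition ptrace_A :: "complex ^ ('n::finite \<times> 'm::finite) ^ ('n \<times> 'm) \<Rightarrow> complex ^ 'n ^ 'n" where
  "ptrace_A M = (\<chi> i j. \<Sum>k\<in>UNIV. M $ (i, k) $ (j, k))"

end

theory Submission
  imports Defs
begin


definition cinner :: "complex^'n \<Rightarrow> complex^'n \<Rightarrow> complex" where
  "cinner x y = (\<Sum>i\<in>UNIV. cnj (x$i) * y$i)"

lemma sum_22: "(\<Sum>p\<in>(UNIV::(2\<times>2) set). f p) = f (1,1) + f (1,2) + f (2,1) + f (2,2)"
proof -
  have "(\<Sum>p\<in>(UNIV::(2\<times>2) set). f p) = (\<Sum>i\<in>(UNIV::2 set). \<Sum>j\<in>(UNIV::2 set). f (i,j))"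
    unfolding UNIV_Times_UNIV[symmetric] sum.cartesian_product by simp
  then show ?thesis by (simp add: sum_2 add.assoc)
qed

lemma ReI: "Re (z * cnj z) \<ge> 0"
  by (simp add: complex_mult_cnj)

lemma per_w:
  fixes w :: "complex^(2\<times>2)" and u v :: "complex^2" and \<alpha> \<beta> a b :: real
  assumes T: "T = (\<chi> i j. (if i = j then complex_of_real (1-\<alpha>) else 0) + u$i * cnj (u$j))"
    and A: "A = (\<chi> i j. (if i = j then complex_of_real (1-\<beta>) else 0) + v$i * cnj (v$j))"
    and nu: "u$1 * cnj (u$1) + u$2 * cnj (u$2) = complex_of_real a"
    and nv: "v$1 * cnj (v$1) + v$2 * cnj (v$2) = complex_of_real b"
  shows "\<exists>P Q. Re (cinner w (tensor_mat T A *v w)) = (1-\<alpha>)*(1-\<beta>)*Re (cinner w w) + (1-\<alpha>)*P + (1-\<beta>)*Q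
      + Re (cinner (\<chi> p. u$(fst p) * v$(snd p)) w * cnj (cinner (\<chi> p. u$(fst p) * v$(snd p)) w))
    \<and> P \<le> b * Re (cinner w w) \<and> Q \<le> a * Re (cinner w w)
    \<and> a * P + b * Q - Re (cinner (\<chi> p. u$(fst p) * v$(snd p)) w * cnj (cinner (\<chi> p. u$(fst p) * v$(snd p)) w))
       \<le> a * b * Re (cinner w w)"
proof -
  define u1 where "u1 = u$1"
  define u2 where "u2 = u$2"
  define v1 where "v1 = v$1"
  define v2 where "v2 = v$2"
  define w11 where "w11 = w$(1,1)"
  define w12 where "w12 = w$(1,2)"
  define w21 where "w21 = w$(2,1)"
  define w22 where "w22 = w$(2,2)"
  define N where "N = cinner w w"
  define E where "E = cinner (\<chi> p. u$(fst p) * v$(snd p)) w"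
  define Pc where "Pc = (cnj v1 * w11 + cnj v2 * w12) * cnj (cnj v1 * w11 + cnj v2 * w12) + (cnj v1 * w21 + cnj v2 * w22) * cnj (cnj v1 * w21 + cnj v2 * w22)"
  define Qc where "Qc = (cnj u1 * w11 + cnj u2 * w21) * cnj (cnj u1 * w11 + cnj u2 * w21) + (cnj u1 * w12 + cnj u2 * w22) * cnj (cnj u1 * w12 + cnj u2 * w22)"
  have Nx: "N = w11 * cnj w11 + w12 * cnj w12 + w21 * cnj w21 + w22 * cnj w22"
    unfolding N_def cinner_def sum_22 w11_def w12_def w21_def w22_def by (simp add: mult.commute)
  have Ex: "E = cnj u1 * cnj v1 * w11 + cnj u1 * cnj v2 * w12 + cnj u2 * cnj v1 * w21 + cnj u2 * cnj v2 * w22"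
    unfolding E_def cinner_def sum_22 w11_def w12_def w21_def w22_def u1_def u2_def v1_def v2_def by simp
  have main: "cinner w (tensor_mat T A *v w) = complex_of_real ((1-\<alpha>)*(1-\<beta>)) * N
     + complex_of_real (1-\<alpha>) * Pc + complex_of_real (1-\<beta>) * Qc + E * cnj E"
    unfolding Nx Ex Pc_def Qc_def
    unfolding cinner_def tensor_mat_def matrix_vector_mult_def sum_22 T A
    unfolding w11_def w12_def w21_def w22_def u1_def u2_def v1_def v2_def
    by (simp add: field_simps)
  have Pb: "complex_of_real b * N - Pc = (v1 * w12 - v2 * w11) * cnj (v1 * w12 - v2 * w11) + (v1 * w22 - v2 * w21) * cnj (v1 * w22 - v2 * w21)"
    unfolding Nx Pc_def nv[symmetric] v1_def[symmetric] v2_def[symmetric] by (simp add: field_simps)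
  have Qa: "complex_of_real a * N - Qc = (u1 * w21 - u2 * w11) * cnj (u1 * w21 - u2 * w11) + (u1 * w22 - u2 * w12) * cnj (u1 * w22 - u2 * w12)"
    unfolding Nx Qc_def nu[symmetric] u1_def[symmetric] u2_def[symmetric] by (simp add: field_simps)
  have PQ: "complex_of_real a * complex_of_real b * N - complex_of_real a * Pc - complex_of_real b * Qc + E * cnj E
     = (u2 * v2 * w11 - u2 * v1 * w12 - u1 * v2 * w21 + u1 * v1 * w22) * cnj (u2 * v2 * w11 - u2 * v1 * w12 - u1 * v2 * w21 + u1 * v1 * w22)"
    unfolding Nx Ex Pc_def Qc_def nu[symmetric] nv[symmetric] u1_def[symmetric] u2_def[symmetric] v1_def[symmetric] v2_def[symmetric]
    by (simp add: field_simps)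
  have r1: "Re (cinner w (tensor_mat T A *v w)) = (1-\<alpha>)*(1-\<beta>)*Re N + (1-\<alpha>)*Re Pc + (1-\<beta>)*Re Qc + Re (E * cnj E)"
    unfolding main by simp
  have r2: "Re Pc \<le> b * Re N"
  proof -
    have "Re (complex_of_real b * N - Pc) \<ge> 0" unfolding Pb using ReI by (simp only: plus_complex.sel) (meson add_nonneg_nonneg)
    then show ?thesis by simp
  qed
  have r3: "Re Qc \<le> a * Re N"
  proof -
    have "Re (complex_of_real a * N - Qc) \<ge> 0" unfolding Qa using ReI by (simp only: plus_complex.sel) (meson add_nonneg_nonneg)
    then show ?thesis by simp
  qed
  have r4: "a * Re Pc + b * Re Qc - Re (E * cnj E) \<le> a * b * Re N"
  proof -
    have "Re (complex_of_real a * complex_of_real b * N - complex_of_real a * Pc - complex_of_real b * Qc + E * cnj E) \<ge> 0"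
      unfolding PQ by (rule ReI)
    then show ?thesis by simp
  qed
  show ?thesis using r1 r2 r3 r4 unfolding N_def E_def by blast
qed

lemma cinner_adj: fixes M :: "complex^'n^'n" shows "cinner x (M *v y) = cinner (adjoint_mat M *v x) y"
proof -
  have "cinner x (M *v y) = (\<Sum>i\<in>UNIV. \<Sum>j\<in>UNIV. cnj (x$i) * M$i$j * y$j)"
    unfolding cinner_def matrix_vector_mult_def by (simp add: sum_distrib_left mult.assoc)
  also have "... = (\<Sum>j\<in>UNIV. \<Sum>i\<in>UNIV. cnj (x$i) * M$i$j * y$j)" by (rule sum.swap)
  also have "... = cinner (adjoint_mat M *v x) y"
    unfolding cinner_def matrix_vector_mult_def adjoint_mat_def
    by (simp add: sum_distrib_left sum_distrib_right cnj_sum mult.commute mult.left_commute)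
  finally show ?thesis .
qed

lemma adj_adj: "adjoint_mat (adjoint_mat M) = M"
  unfolding adjoint_mat_def by (simp add: vec_eq_iff)

lemma cinner_self_mult: fixes M :: "complex^'n^'n"
  shows "cinner (M *v y) (M *v y) = cinner ((adjoint_mat M ** M) *v y) y"
  by (simp add: cinner_adj matrix_vector_mul_assoc)

lemma lagR: fixes f1 f2 x1 x2 :: complex
  shows "Re ((cnj f1 * x1 + cnj f2 * x2) * cnj (cnj f1 * x1 + cnj f2 * x2))
    \<le> Re (cnj f1 * f1 + cnj f2 * f2) * Re (cnj x1 * x1 + cnj x2 * x2)"
proof -
  have id: "(cnj f1 * f1 + cnj f2 * f2) * (cnj x1 * x1 + cnj x2 * x2) - (cnj f1 * x1 + cnj f2 * x2) * cnj (cnj f1 * x1 + cnj f2 * x2)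
     = (f1 * x2 - f2 * x1) * cnj (f1 * x2 - f2 * x1)" by (simp add: field_simps)
  have "Re ((cnj f1 * f1 + cnj f2 * f2) * (cnj x1 * x1 + cnj x2 * x2) - (cnj f1 * x1 + cnj f2 * x2) * cnj (cnj f1 * x1 + cnj f2 * x2)) \<ge> 0"
    unfolding id by (rule ReI)
  moreover have "Re ((cnj f1 * f1 + cnj f2 * f2) * (cnj x1 * x1 + cnj x2 * x2)) = Re (cnj f1 * f1 + cnj f2 * f2) * Re (cnj x1 * x1 + cnj x2 * x2)"
    by (simp add: complex_mult_cnj[unfolded mult.commute[of _ "cnj _"]])
  ultimately show ?thesis by simp
qed

lemma ptrace_split:
  fixes M :: "complex^(2\<times>2)^(2\<times>2)" and x :: "complex^2"
  shows "cinner x (ptrace_A M *v x) =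
     cinner (\<chi> p. if snd p = 1 then x$(fst p) else 0) (M *v (\<chi> p. if snd p = 1 then x$(fst p) else 0))
   + cinner (\<chi> p. if snd p = 2 then x$(fst p) else 0) (M *v (\<chi> p. if snd p = 2 then x$(fst p) else 0))"
  unfolding cinner_def ptrace_A_def matrix_vector_mult_def sum_22 sum_2
  by (simp add: distrib_left distrib_right)


lemma final_arith:
  fixes \<alpha> \<beta> n P Q Rr S :: real
  assumes "1/2 \<le> \<alpha>" "\<alpha> \<le> 1" "1/2 \<le> \<beta>" "\<beta> \<le> 1" "n > 0"
    "P \<le> (2*\<beta>-1)*(2*n)" "Q \<le> (2*\<alpha>-1)*(2*n)"
    "(2*\<alpha>-1)*P + (2*\<beta>-1)*Q - Rr \<le> (2*\<alpha>-1)*(2*\<beta>-1)*(2*n)"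
    "Rr \<le> (2*\<alpha>-1)*(2*\<beta>-1)*n"
    "S = (1-\<alpha>)*(1-\<beta>)*(2*n) + (1-\<alpha>)*P + (1-\<beta>)*Q + Rr"
  shows "S \<le> max \<alpha> \<beta> * n"
proof -
  define a where "a = 2*\<alpha>-1"
  define b where "b = 2*\<beta>-1"
  have a0: "0 \<le> a" "a \<le> 1" "0 \<le> b" "b \<le> 1" using assms unfolding a_def b_def by auto
  have S2: "2*S = (1-a)*(1-b)*n + (1-a)*P + (1-b)*Q + 2*Rr"
    using assms(10) unfolding a_def b_def by (simp add: algebra_simps)
  have c1: "P \<le> 2*b*n" "Q \<le> 2*a*n" "a*P + b*Q - Rr \<le> 2*a*b*n" "Rr \<le> a*b*n"
    using assms(6-9) unfolding a_def b_def by (auto simp: algebra_simps)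
  have idb: "b*((1+b)*n - 2*S) = (2*b*n-P)*(b-a) + (a*b*n - Rr)*(1+b) + (2*a*b*n - a*P - b*Q + Rr)*(1-b)"
    unfolding S2 by (simp add: algebra_simps)
  have ida: "a*((1+a)*n - 2*S) = (2*a*n-Q)*(a-b) + (a*b*n - Rr)*(1+a) + (2*a*b*n - a*P - b*Q + Rr)*(1-a)"
    unfolding S2 by (simp add: algebra_simps)
  show ?thesis
  proof (cases "a \<le> b")
    case True
    have "S \<le> \<beta> * n"
    proof (cases "b = 0")
      case True
      then have "a = 0" using \<open>a \<le> b\<close> a0 by auto
      have e2: "P \<le> 0" "Q \<le> 0" "Rr = 0" using c1 \<open>a=0\<close> True by auto
      have e1: "2*S = n + P + Q" using S2 \<open>a=0\<close> True e2 by simp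
      have e3: "\<beta> * n = n/2" using True b_def by simp
      show ?thesis using e1 e2 e3 by linarith
    next
      case False
      then have "b > 0" using a0 by auto
      have "0 \<le> (2*b*n-P)*(b-a)" using c1 True by (intro mult_nonneg_nonneg) auto
      moreover have "0 \<le> (a*b*n - Rr)*(1+b)" using c1 a0 by (intro mult_nonneg_nonneg) auto
      moreover have "0 \<le> (2*a*b*n - a*P - b*Q + Rr)*(1-b)" using c1 a0 by (intro mult_nonneg_nonneg) auto
      ultimately have "0 \<le> b*((1+b)*n - 2*S)" unfolding idb by linarith
      then have "0 \<le> (1+b)*n - 2*S" using \<open>b>0\<close> by (simp add: zero_le_mult_iff)
      then show ?thesis unfolding b_def by (simp add: algebra_simps)
    qed
    then show ?thesis by (smt (verit) assms(5) mult_right_mono max.cobounded2)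
  next
    case False
    then have "a > 0" using a0 by auto
    have "0 \<le> (2*a*n-Q)*(a-b)" using c1 False by (intro mult_nonneg_nonneg) auto
    moreover have "0 \<le> (a*b*n - Rr)*(1+a)" using c1 a0 by (intro mult_nonneg_nonneg) auto
    moreover have "0 \<le> (2*a*b*n - a*P - b*Q + Rr)*(1-a)" using c1 a0 by (intro mult_nonneg_nonneg) auto
    ultimately have "0 \<le> a*((1+a)*n - 2*S)" unfolding ida by linarith
    then have "0 \<le> (1+a)*n - 2*S" using \<open>a>0\<close> by (simp add: zero_le_mult_iff)
    then have "S \<le> \<alpha> * n" unfolding a_def by (simp add: algebra_simps)
    then show ?thesis by (smt (verit) assms(5) mult_right_mono max.cobounded1)
  qed
qed


lemma vec2_nz: fixes x :: "complex^2" assumes "x \<noteq> 0"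
  shows "x$1 \<noteq> 0 \<or> x$2 \<noteq> 0"
  using assms by (auto simp: vec_eq_iff forall_2)

lemma dens_decomp:
  fixes T :: "complex^2^2" and \<alpha> :: real
  assumes "density_mat T" "complex_of_real (1-\<alpha>) \<in> eigenvalues_mat T" "\<alpha> \<ge> 1 - \<alpha>"
  shows "\<exists>u::complex^2. T = (\<chi> i j. (if i = j then complex_of_real (1-\<alpha>) else 0) + u$i * cnj (u$j))
     \<and> u$1 * cnj (u$1) + u$2 * cnj (u$2) = complex_of_real (2*\<alpha>-1) \<and> \<alpha> \<le> 1"
proof -
  have H: "adjoint_mat T = T" and tr: "trace_mat T = 1" and ps: "psd_mat T"
    using assms(1) unfolding density_mat_def hermitian_mat_def by auto
  obtain x where x: "x \<noteq> 0" "T *v x = complex_of_real (1-\<alpha>) *s x"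
    using assms(2) unfolding eigenvalues_mat_def by auto
  define p where "p = T$1$1"
  define z where "z = T$1$2"
  define s where "s = T$2$2"
  have hij: "cnj (T$j$i) = T$i$j" for i j
  proof -
    have "adjoint_mat T $ i $ j = T $ i $ j" using H by simp
    then show ?thesis by (simp add: adjoint_mat_def)
  qed
  have T21: "T$2$1 = cnj z" using hij[of 1 2] unfolding z_def by (metis complex_cnj_cnj)
  have realI: "w = complex_of_real (Re w)" if "cnj w = w" for w
  proof -
    have "Im (cnj w) = Im w" using that by simp
    then have "Im w = 0" by simp
    then show ?thesis by (simp add: complex_eq_iff)
  qed
  have pr: "p = complex_of_real (Re p)" using realI hij[of 1 1] unfolding p_def by simp
  have sr: "s = complex_of_real (Re s)" using realI hij[of 2 2] unfolding s_def by simp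
  have trr: "Re p + Re s = 1"
  proof -
    have "T$1$1 + T$2$2 = 1" using tr by (simp add: trace_mat_def sum_2)
    then have "Re (T$1$1 + T$2$2) = 1" by simp
    then show ?thesis by (simp add: p_def s_def)
  qed
  define c where "c = complex_of_real (1-\<alpha>)"
  have e1: "p * x$1 + z * x$2 = c * x$1" and e2: "cnj z * x$1 + s * x$2 = c * x$2"
  proof -
    have "(T *v x)$1 = (c *s x)$1" "(T *v x)$2 = (c *s x)$2" using x(2) unfolding c_def by simp_all
    then show "p * x$1 + z * x$2 = c * x$1" "cnj z * x$1 + s * x$2 = c * x$2"
      by (simp_all add: matrix_vector_mult_def sum_2 p_def z_def s_def T21[unfolded z_def])
  qed
  have det: "(p - c) * (s - c) = z * cnj z"
  proof -
    have "((p - c) * (s - c) - z * cnj z) * x$1 = 0" "((p - c) * (s - c) - z * cnj z) * x$2 = 0"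
      using e1 e2 by algebra+
    then show ?thesis using vec2_nz[OF x(1)] by auto
  qed
  have a1: "\<alpha> \<le> 1"
  proof -
    have "Re (\<Sum>i\<in>UNIV. cnj (x $ i) * (T *v x) $ i) \<ge> 0" using ps unfolding psd_mat_def by blast
    also have "(\<Sum>i\<in>UNIV. cnj (x $ i) * (T *v x) $ i) = c * (cnj (x$1) * x$1 + cnj (x$2) * x$2)"
    proof -
      have tx: "(T *v x)$i = c * x$i" for i
      proof -
        have "(T *v x)$i = (c *s x)$i" using x(2) unfolding c_def by simp
        then show ?thesis by simp
      qed
      show ?thesis unfolding sum_2 tx by (simp add: algebra_simps)
    qed
    finally have "0 \<le> (1-\<alpha>) * (Re (cnj (x$1) * x$1) + Re (cnj (x$2) * x$2))" unfolding c_def by simp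
    moreover have "Re (cnj (x$1) * x$1) + Re (cnj (x$2) * x$2) > 0"
    proof -
      have q: "Re (cnj w * w) = (cmod w)^2" for w
        by (metis Re_complex_of_real complex_norm_square mult.commute of_real_power)
      show ?thesis unfolding q using vec2_nz[OF x(1)]
        by (auto intro: add_pos_nonneg add_nonneg_pos)
    qed
    ultimately show ?thesis by (simp add: zero_le_mult_iff)
  qed
  define p' where "p' = Re p - (1-\<alpha>)"
  define s' where "s' = Re s - (1-\<alpha>)"
  have ps': "p' + s' = 2*\<alpha> - 1" using trr unfolding p'_def s'_def by simp
  have zz: "z * cnj z = complex_of_real ((cmod z)^2)" by (simp add: complex_norm_square[symmetric])
  have dets: "p' * s' = (cmod z)^2"
  proof -
    have "(p - c) * (s - c) = complex_of_real (p' * s')"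
      using pr sr unfolding p'_def s'_def c_def
      by (metis of_real_diff of_real_mult)
    then show ?thesis using det zz by (metis of_real_eq_iff)
  qed
  show ?thesis
  proof (cases "p' > 0")
    case True
    define r where "r = sqrt p'"
    have r: "r > 0" "r * r = p'" using True unfolding r_def by auto
    define u :: "complex^2" where "u = (\<chi> i. if i = 1 then complex_of_real r else cnj z / complex_of_real r)"
    have u1: "u$1 = complex_of_real r" and u2: "u$2 = cnj z / complex_of_real r" unfolding u_def by auto
    have n1: "u$1 * cnj (u$1) = complex_of_real p'" using r u1 by (simp flip: of_real_mult)
    have n2: "u$2 * cnj (u$2) = complex_of_real s'"
    proof -
      have "u$2 * cnj (u$2) = (z * cnj z) / complex_of_real (r*r)" using u2 by (simp add: field_simps)
      also have "... = complex_of_real ((cmod z)^2 / p')" using zz r by simp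
      also have "(cmod z)^2 / p' = s'" using dets True by (simp add: field_simps)
      finally show ?thesis .
    qed
    have m12: "u$1 * cnj (u$2) = z" using u1 u2 r by simp
    have m21: "u$2 * cnj (u$1) = cnj z" using u1 u2 r by simp
    have "T = (\<chi> i j. (if i = j then complex_of_real (1-\<alpha>) else 0) + u$i * cnj (u$j))"
      unfolding vec_eq_iff forall_2
      using n1 n2 m12 m21 pr sr T21 unfolding p_def s_def z_def p'_def s'_def
      by (simp flip: of_real_add)
    moreover have "u$1 * cnj (u$1) + u$2 * cnj (u$2) = complex_of_real (2*\<alpha>-1)"
      using n1 n2 ps' by (metis of_real_add)
    ultimately show ?thesis using a1 by blast
  next
    case False
    have cz: "(cmod z)^2 \<ge> 0" by simp
    have p0: "p' = 0"
    proof (rule ccontr)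
      assume "p' \<noteq> 0"
      then have "p' < 0" using False by simp
      then have "s' > 0" using ps' assms(3) by simp
      then have "p' * s' < 0" using \<open>p' < 0\<close> by (simp add: mult_neg_pos)
      then show False using dets cz by simp
    qed
    then have z0: "z = 0" using dets by simp
    have s0: "s' \<ge> 0" using ps' p0 assms(3) by simp
    define r where "r = sqrt s'"
    have r: "r * r = s'" using s0 unfolding r_def by simp
    define u :: "complex^2" where "u = (\<chi> i. if i = 1 then 0 else complex_of_real r)"
    have u1: "u$1 = 0" and u2: "u$2 = complex_of_real r" unfolding u_def by auto
    have n2: "u$2 * cnj (u$2) = complex_of_real s'" using r u2 by (simp flip: of_real_mult)
    have "T = (\<chi> i j. (if i = j then complex_of_real (1-\<alpha>) else 0) + u$i * cnj (u$j))"
      unfolding vec_eq_iff forall_2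
      using n2 u1 pr sr T21 z0 p0 unfolding p_def s_def z_def p'_def s'_def
      by (simp flip: of_real_add)
    moreover have "u$1 * cnj (u$1) + u$2 * cnj (u$2) = complex_of_real (2*\<alpha>-1)"
      using u1 n2 ps' p0 by simp
    ultimately show ?thesis using a1 by blast
  qed
qed


theorem theorem1:
  fixes \<rho>T \<rho>A :: "complex ^ 2 ^ 2"
    and U :: "complex ^ (2 \<times> 2) ^ (2 \<times> 2)"
    and \<alpha> \<beta> \<alpha>out :: real
  assumes "density_mat \<rho>T" and "density_mat \<rho>A"
    and "\<alpha> \<ge> 1 - \<alpha>"
    and "eigenvalues_mat \<rho>T = {complex_of_real \<alpha>, complex_of_real (1 - \<alpha>)}"
    and "\<beta> \<ge> 1 - \<beta>"
    and "eigenvalues_mat \<rho>A = {complex_of_real \<beta>, complex_of_real (1 - \<beta>)}"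
    and "unitary_mat U"
    and "\<alpha>out \<ge> 1 - \<alpha>out"
    and "eigenvalues_mat (ptrace_A (U ** tensor_mat \<rho>T \<rho>A ** adjoint_mat U))
           = {complex_of_real \<alpha>out, complex_of_real (1 - \<alpha>out)}"
  shows "\<alpha>out \<le> max \<alpha> \<beta>"
proof -
  obtain u where u: "\<rho>T = (\<chi> i j. (if i = j then complex_of_real (1-\<alpha>) else 0) + u$i * cnj (u$j))"
      "u$1 * cnj (u$1) + u$2 * cnj (u$2) = complex_of_real (2*\<alpha>-1)" "\<alpha> \<le> 1"
    using dens_decomp[OF assms(1) _ assms(3)] assms(4) by auto
  obtain v where v: "\<rho>A = (\<chi> i j. (if i = j then complex_of_real (1-\<beta>) else 0) + v$i * cnj (v$j))"
      "v$1 * cnj (v$1) + v$2 * cnj (v$2) = complex_of_real (2*\<beta>-1)" "\<beta> \<le> 1"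
    using dens_decomp[OF assms(2) _ assms(5)] assms(6) by auto
  have UU: "U ** adjoint_mat U = mat 1" "adjoint_mat U ** U = mat 1"
    using assms(7) unfolding unitary_mat_def by auto
  define R where "R = tensor_mat \<rho>T \<rho>A"
  define M where "M = U ** R ** adjoint_mat U"
  obtain x where x: "x \<noteq> 0" "ptrace_A M *v x = complex_of_real \<alpha>out *s x"
    using assms(9) unfolding M_def R_def eigenvalues_mat_def by blast
  define y where "y k = (\<chi> p. if snd p = k then x$(fst p) else (0::complex))" for k :: 2
  define w where "w k = adjoint_mat U *v y k" for k
  define e where "e = (\<chi> p::2\<times>2. u$(fst p) * v$(snd p))"
  define n where "n = Re (cinner x x)"
  have q: "Re (cnj z * z) = (cmod z)^2" for z
    by (metis Re_complex_of_real complex_norm_square mult.commute of_real_power)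
  have npos: "n > 0"
    unfolding n_def cinner_def sum_2 plus_complex.sel q using vec2_nz[OF x(1)]
    by (auto intro: add_pos_nonneg add_nonneg_pos)
  have S1: "Re (cinner x (ptrace_A M *v x)) = \<alpha>out * n"
  proof -
    have "cinner x (ptrace_A M *v x) = complex_of_real \<alpha>out * cinner x x"
      unfolding x(2) cinner_def by (simp add: sum_distrib_left mult_ac)
    then show ?thesis unfolding n_def by simp
  qed
  have split: "cinner x (ptrace_A M *v x) = cinner (y 1) (M *v y 1) + cinner (y 2) (M *v y 2)"
    unfolding y_def by (rule ptrace_split)
  have conj: "cinner (y k) (M *v y k) = cinner (w k) (R *v w k)" for k
  proof -
    have "M *v y k = U *v (R *v (adjoint_mat U *v y k))"
      unfolding M_def by (simp add: matrix_vector_mul_assoc matrix_mul_assoc)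
    then show ?thesis unfolding w_def by (simp add: cinner_adj)
  qed
  have yy: "cinner (y k) (y k) = cinner x x" for k
    using exhaust_2[of k] by (auto simp: cinner_def sum_22 sum_2 y_def)
  have Nk: "Re (cinner (w k) (w k)) = n" for k
    unfolding w_def cinner_self_mult adj_adj UU(1) n_def using yy by simp
  define f where "f = U *v e"
  have ff: "cinner f f = cinner e e" unfolding f_def cinner_self_mult UU(2) by simp
  have ee: "cinner e e = complex_of_real ((2*\<alpha>-1)*(2*\<beta>-1))"
  proof -
    have "cinner e e = (u$1 * cnj (u$1) + u$2 * cnj (u$2)) * (v$1 * cnj (v$1) + v$2 * cnj (v$2))"
      unfolding e_def cinner_def sum_22 by (simp add: algebra_simps)
    then show ?thesis using u(2) v(2) by simp
  qed
  have Ek: "cinner e (w k) = cnj (f$(1,k)) * x$1 + cnj (f$(2,k)) * x$2" for k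
  proof -
    have "cinner e (w k) = cinner f (y k)"
      unfolding w_def f_def cinner_adj adj_adj ..
    also have "... = cnj (f$(1,k)) * x$1 + cnj (f$(2,k)) * x$2"
      using exhaust_2[of k] by (auto simp: cinner_def sum_22 y_def)
    finally show ?thesis .
  qed
  have bessel: "Re (cinner e (w 1) * cnj (cinner e (w 1))) + Re (cinner e (w 2) * cnj (cinner e (w 2)))
      \<le> (2*\<alpha>-1)*(2*\<beta>-1) * n"
  proof -
    have b1: "Re (cinner e (w 1) * cnj (cinner e (w 1))) \<le> Re (cnj (f$(1,1)) * f$(1,1) + cnj (f$(2,1)) * f$(2,1)) * n"
      unfolding Ek unfolding n_def cinner_def sum_2 by (rule lagR)
    have b2: "Re (cinner e (w 2) * cnj (cinner e (w 2))) \<le> Re (cnj (f$(1,2)) * f$(1,2) + cnj (f$(2,2)) * f$(2,2)) * n"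
      unfolding Ek unfolding n_def cinner_def sum_2 by (rule lagR)
    have b3: "Re (cnj (f$(1,1)) * f$(1,1) + cnj (f$(2,1)) * f$(2,1)) + Re (cnj (f$(1,2)) * f$(1,2) + cnj (f$(2,2)) * f$(2,2))
        = Re (cinner f f)"
      unfolding cinner_def sum_22 by simp
    have "Re (cinner e (w 1) * cnj (cinner e (w 1))) + Re (cinner e (w 2) * cnj (cinner e (w 2)))
       \<le> Re (cnj (f$(1,1)) * f$(1,1) + cnj (f$(2,1)) * f$(2,1)) * n + Re (cnj (f$(1,2)) * f$(1,2) + cnj (f$(2,2)) * f$(2,2)) * n"
      using b1 b2 by (rule add_mono)
    also have "... = Re (cinner f f) * n" unfolding b3[symmetric] by (rule distrib_right[symmetric])
    finally have "Re (cinner e (w 1) * cnj (cinner e (w 1))) + Re (cinner e (w 2) * cnj (cinner e (w 2))) \<le> Re (cinner f f) * n" .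
    then show ?thesis unfolding ff ee by simp
  qed
  obtain P1 Q1 where pw1: "Re (cinner (w 1) (R *v w 1)) = (1-\<alpha>)*(1-\<beta>)*n + (1-\<alpha>)*P1 + (1-\<beta>)*Q1
      + Re (cinner e (w 1) * cnj (cinner e (w 1)))"
      "P1 \<le> (2*\<beta>-1) * n" "Q1 \<le> (2*\<alpha>-1) * n"
      "(2*\<alpha>-1) * P1 + (2*\<beta>-1) * Q1 - Re (cinner e (w 1) * cnj (cinner e (w 1))) \<le> (2*\<alpha>-1) * (2*\<beta>-1) * n"
    using per_w[OF u(1) v(1) u(2) v(2), of "w 1"] unfolding R_def e_def Nk by blast
  obtain P2 Q2 where pw2: "Re (cinner (w 2) (R *v w 2)) = (1-\<alpha>)*(1-\<beta>)*n + (1-\<alpha>)*P2 + (1-\<beta>)*Q2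
      + Re (cinner e (w 2) * cnj (cinner e (w 2)))"
      "P2 \<le> (2*\<beta>-1) * n" "Q2 \<le> (2*\<alpha>-1) * n"
      "(2*\<alpha>-1) * P2 + (2*\<beta>-1) * Q2 - Re (cinner e (w 2) * cnj (cinner e (w 2))) \<le> (2*\<alpha>-1) * (2*\<beta>-1) * n"
    using per_w[OF u(1) v(1) u(2) v(2), of "w 2"] unfolding R_def e_def Nk by blast
  have Stot: "\<alpha>out * n = Re (cinner (w 1) (R *v w 1)) + Re (cinner (w 2) (R *v w 2))"
    using S1 unfolding split conj by simp
  have "\<alpha>out * n \<le> max \<alpha> \<beta> * n"
    apply (rule final_arith[where P = "P1+P2" and Q = "Q1+Q2"
          and Rr = "Re (cinner e (w 1) * cnj (cinner e (w 1))) + Re (cinner e (w 2) * cnj (cinner e (w 2)))"])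
    using assms(3) assms(5) u(3) v(3) npos pw1 pw2 bessel Stot by (auto simp: algebra_simps)
  then show ?thesis using npos by simp
qed

end
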